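(* Let $a,b,c\in\mathbb{R}$, $\lambda>0$, and consider the scalar linear jump-diffusion test equation $$dX(t)=aX(t^-)\,dt+bX(t^-)\,dW(t)+cX(t^-)\,dN(t),\qquad X(0)=X_0,$$ with $\mathbb{E}|X_0|^2<\infty$. Let $l:=2a+b^2+\lambda c(2+c)$ and assume $l<0$. Then $a+\lambda c<0$, and the semi-tamed scheme applied to this equation, namely (with $u(x)=ax$, $v\equiv 0$) $$Y_{n+1}=Y_n+aY_n\Delta t+bY_n\Delta W_n+cY_n\Delta N_n,\qquad Y_0=X_0,$$ is mean-square stable (i.e. $\lim_{n\to\infty}\mathbb{E}(Y_n^2)=0$) if and only if $$\Delta t<\frac{-l}{(a+\lambda c)^2}.$$
   Context: $(\Omega,\mathcal F,\mathbb P)$ is a complete probability space with filtration $(\mathcal F_t)_{t\ge0}$; $W$ is a one-dimensional standard Brownian motion and $N$ is a Poisson process with intensity $\lambda$, independent of $W$ (and of $X_0$). $\Delta t>0$ is the step size, $t_n=n\Delta t$, $\Delta W_n=W(t_{n+1})-W(t_n)$, $\Delta N_n=N(t_{n+1})-N(t_n)$. In general, for $dX=f(X)dt+g(X)dW+h(X)dN$ with $f=u+v$ ($u$ the globally Lipschitz part, $v$ the non-globally Lipschitz part), the semi-tamed scheme is $Y_{n+1}=Y_n+u(Y_n)\Delta t+\frac{\Delta t\, v(Y_n)}{1+\Delta t\|v(Y_n)\|}+g(Y_n)\Delta W_n+h(Y_n)\Delta N_n$; for the linear test equation $u(x)=ax$, $v\equiv0$. The condition $l<0$ is equivalent to mean-square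 stability of the exact solution. *)

theory Defs
  imports "HOL-Probability.Probability"
begin

datatype incr_idx = IX0 | IW nat | IN nat

(* Standard Brownian motion (one-dimensional) on the probability space M:
   measurable, starts at 0 a.s., a.s. continuous paths, Gaussian increments
   W t - W s ~ N(0, t - s).  (Independence of increments is part of
   joint_indep below.) *)
definition is_brownian :: "'a measure \<Rightarrow> (real \<Rightarrow> 'a \<Rightarrow> real) \<Rightarrow> bool" where
  "is_brownian M W \<longleftrightarrow>
     (\<forall>t. W t \<in> borel_measurable M) \<and>
     (AE \<omega> in M. W 0 \<omega> = 0) \<and>
     (AE \<omega> in M. continuous_on {0..} (\<lambda>t. W t \<omega>)) \<and>
     (\<forall>s t. 0 \<le> s \<and> s < t \<longrightarrow>
        distributed M lborel (\<lambda>\<omega>. W t \<omega> - W s \<omega>) (normal_density 0 (sqrt (t - s))))"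

definition is_poisson :: "'a measure \<Rightarrow> real \<Rightarrow> (real \<Rightarrow> 'a \<Rightarrow> real) \<Rightarrow> bool" where
  "is_poisson M lam N \<longleftrightarrow>
     (\<forall>t. N t \<in> borel_measurable M) \<and>
     (AE \<omega> in M. N 0 \<omega> = 0) \<and>
     (AE \<omega> in M. mono_on {0..} (\<lambda>t. N t \<omega>) \<and>
                 (\<forall>t\<ge>0. continuous (at_right t) (\<lambda>s. N s \<omega>))) \<and>
     (\<forall>s t (k::nat). 0 \<le> s \<and> s < t \<longrightarrow>
        measure M {\<omega> \<in> space M. N t \<omega> - N s \<omega> = real k}
          = exp (- lam * (t - s)) * (lam * (t - s)) ^ k / fact k)"

(* This encodes
   independent increments of W and of N, independence of W and N, and
   independence of both from X0. *)
definition joint_indep ::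
  "'a measure \<Rightarrow> ('a \<Rightarrow> real) \<Rightarrow> (real \<Rightarrow> 'a \<Rightarrow> real) \<Rightarrow> (real \<Rightarrow> 'a \<Rightarrow> real) \<Rightarrow> bool" where
  "joint_indep M X0 W N \<longleftrightarrow>
     (\<forall>(ts::nat \<Rightarrow> real) k. 0 \<le> ts 0 \<and> (\<forall>j<k. ts j < ts (Suc j)) \<longrightarrow>
        prob_space.indep_vars M (\<lambda>_. borel)
          (\<lambda>i \<omega>. case i of IX0 \<Rightarrow> X0 \<omega>
                          | IW j \<Rightarrow> W (ts (Suc j)) \<omega> - W (ts j) \<omega>
                          | IN j \<Rightarrow> N (ts (Suc j)) \<omega> - N (ts j) \<omega>)
          ({IX0} \<union> IW ` {..<k} \<union> IN ` {..<k}))"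

(* General scalar semi-tamed scheme for dX = (u+v)(X)dt + g(X)dW + h(X)dN,
   step size dt, t_n = n dt. *)
fun semi_tamed ::
  "(real \<Rightarrow> real) \<Rightarrow> (real \<Rightarrow> real) \<Rightarrow> (real \<Rightarrow> real) \<Rightarrow> (real \<Rightarrow> real) \<Rightarrow> real \<Rightarrow>
   (real \<Rightarrow> 'a \<Rightarrow> real) \<Rightarrow> (real \<Rightarrow> 'a \<Rightarrow> real) \<Rightarrow> ('a \<Rightarrow> real) \<Rightarrow> nat \<Rightarrow> 'a \<Rightarrow> real" where
  "semi_tamed u v g h dt W N X0 0 \<omega> = X0 \<omega>"
| "semi_tamed u v g h dt W N X0 (Suc n) \<omega> =
     (let y = semi_tamed u v g h dt W N X0 n \<omega> in
      y + u y * dt + dt * v y / (1 + dt * \<bar>v y\<bar>)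
        + g y * (W (real (Suc n) * dt) \<omega> - W (real n * dt) \<omega>)
        + h y * (N (real (Suc n) * dt) \<omega> - N (real n * dt) \<omega>))"

definition admissible_init ::
  "'a measure \<Rightarrow> ('a \<Rightarrow> real) \<Rightarrow> (real \<Rightarrow> 'a \<Rightarrow> real) \<Rightarrow> (real \<Rightarrow> 'a \<Rightarrow> real) \<Rightarrow> bool" where
  "admissible_init M X0 W N \<longleftrightarrow>
     X0 \<in> borel_measurable M \<and> integrable M (\<lambda>\<omega>. (X0 \<omega>)\<^sup>2) \<and> joint_indep M X0 W N"

definition ms_stable ::
  "'a measure \<Rightarrow> (real \<Rightarrow> real) \<Rightarrow> (real \<Rightarrow> real) \<Rightarrow> (real \<Rightarrow> real) \<Rightarrow> (real \<Rightarrow> real) \<Rightarrow> real \<Rightarrow>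
   (real \<Rightarrow> 'a \<Rightarrow> real) \<Rightarrow> (real \<Rightarrow> 'a \<Rightarrow> real) \<Rightarrow> bool" where
  "ms_stable M u v g h dt W N \<longleftrightarrow>
     (\<forall>X0. admissible_init M X0 W N \<longrightarrow>
        (\<lambda>n. integral\<^sup>L M (\<lambda>\<omega>. (semi_tamed u v g h dt W N X0 n \<omega>)\<^sup>2)) \<longlonglongrightarrow> 0)"

end

theory Submission imports Defs begin
lemma poisson_sums:
  fixes \<mu> :: real
  defines "p \<equiv> \<lambda>k::nat. exp (-\<mu>) * \<mu>^k / fact k"
  shows "p sums 1" "(\<lambda>k. real k * p k) sums \<mu>" "(\<lambda>k. (real k)^2 * p k) sums (\<mu> + \<mu>^2)"
proof -
  have e: "(\<lambda>n. \<mu>^n / fact n) sums exp \<mu>" using exp_converges[of \<mu>] by (simp add: divide_inverse_commute scaleR_conv_of_real)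
  have s1: "(\<lambda>n. exp (-\<mu>) * (\<mu>^n / fact n)) sums (exp (-\<mu>) * exp \<mu>)" by (rule sums_mult[OF e])
  have pe: "p = (\<lambda>n. exp (-\<mu>) * (\<mu>^n / fact n))" unfolding p_def by auto
  show p1: "p sums 1" using s1 unfolding pe by (simp add: exp_minus)
  have suc: "real (Suc k) * p (Suc k) = \<mu> * p k" for k
    unfolding p_def by (simp add: divide_simps)
  have "(\<lambda>k. real (Suc k) * p (Suc k)) sums (\<mu> * 1)"
    unfolding suc by (rule sums_mult[OF p1])
  then show p2: "(\<lambda>k. real k * p k) sums \<mu>" using sums_Suc_iff[of "\<lambda>k. real k * p k" \<mu>] by simp
  have suc2: "(real (Suc k))^2 * p (Suc k) = \<mu> * (real k * p k) + \<mu> * p k" for k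
  proof -
    have "(real (Suc k))^2 * p (Suc k) = real (Suc k) * (\<mu> * p k)" using suc[of k] by (simp add: power2_eq_square)
    also have "\<dots> = \<mu> * (real k * p k) + \<mu> * p k" by (simp add: algebra_simps)
    finally show ?thesis .
  qed
  have "(\<lambda>k. (real (Suc k))^2 * p (Suc k)) sums (\<mu> * \<mu> + \<mu> * 1)"
    unfolding suc2 by (intro sums_add sums_mult p1 p2)
  then show "(\<lambda>k. (real k)^2 * p k) sums (\<mu> + \<mu>^2)"
    using sums_Suc_iff[of "\<lambda>k. (real k)^2 * p k" "\<mu> + \<mu>^2"] by (simp add: power2_eq_square algebra_simps)
qed
context prob_space begin

lemma poisson_nn:
  assumes D[measurable]: "D \<in> borel_measurable M"
    and P: "\<And>k::nat. prob {\<omega>\<in>space M. D \<omega> = real k} = exp (-\<mu>) * \<mu>^k / fact k"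
    and g[measurable]: "g \<in> borel_measurable borel"
  shows "(AE \<omega> in M. \<exists>k::nat. D \<omega> = real k)"
    "(\<integral>\<^sup>+\<omega>. ennreal (g (D \<omega>)) \<partial>M) = (\<Sum>k. ennreal (g (real k)) * ennreal (exp (-\<mu>) * \<mu>^k / fact k))"
proof -
  define A where "A k = {\<omega>\<in>space M. D \<omega> = real k}" for k :: nat
  have Am[measurable]: "A k \<in> sets M" for k unfolding A_def by measurable
  have disj: "disjoint_family A" unfolding disjoint_family_on_def A_def by auto
  have "(\<lambda>k. prob (A k)) sums prob (\<Union>k. A k)"
    by (rule measure_UNION) (use Am disj in auto)
  moreover have "(\<lambda>k. prob (A k)) sums 1" using poisson_sums(1)[of \<mu>] P unfolding A_def by simp
  ultimately have "prob (\<Union>k. A k) = 1" using sums_unique2 by blast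
  then have AE1: "AE \<omega> in M. \<omega> \<in> (\<Union>k. A k)" by (rule AE_prob_1)
  then show "AE \<omega> in M. \<exists>k::nat. D \<omega> = real k" unfolding A_def by auto
  have "(\<integral>\<^sup>+\<omega>. ennreal (g (D \<omega>)) \<partial>M) = (\<integral>\<^sup>+\<omega>. (\<Sum>k. ennreal (g (real k)) * indicator (A k) \<omega>) \<partial>M)"
  proof (rule nn_integral_cong_AE)
    show "AE \<omega> in M. ennreal (g (D \<omega>)) = (\<Sum>k. ennreal (g (real k)) * indicator (A k) \<omega>)"
      using AE1
    proof eventually_elim
      case (elim \<omega>)
      then obtain k0 where k0: "\<omega> \<in> A k0" by auto
      have "(\<lambda>k. ennreal (g (real k)) * indicator (A k) \<omega>) = (\<lambda>k. if k = k0 then ennreal (g (real k)) else 0)"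
        using k0 by (auto simp: A_def indicator_def fun_eq_iff)
      then have "(\<lambda>k. ennreal (g (real k)) * indicator (A k) \<omega>) sums ennreal (g (real k0))"
        using sums_single[of k0 "\<lambda>k. ennreal (g (real k))"] by simp
      moreover have "D \<omega> = real k0" using k0 by (simp add: A_def)
      ultimately show ?case using sums_unique by metis
    qed
  qed
  also have "\<dots> = (\<Sum>k. \<integral>\<^sup>+\<omega>. ennreal (g (real k)) * indicator (A k) \<omega> \<partial>M)"
    by (rule nn_integral_suminf) measurable
  also have "\<dots> = (\<Sum>k. ennreal (g (real k)) * ennreal (exp (-\<mu>) * \<mu>^k / fact k))"
    using P by (simp add: nn_integral_cmult_indicator emeasure_eq_measure A_def)
  finally show "(\<integral>\<^sup>+\<omega>. ennreal (g (D \<omega>)) \<partial>M) = (\<Sum>k. ennreal (g (real k)) * ennreal (exp (-\<mu>) * \<mu>^k / fact k))" .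
qed

end
context prob_space begin
lemma poisson_moments:
  assumes D[measurable]: "D \<in> borel_measurable M" and mu: "\<mu> > 0"
    and P: "\<And>k::nat. prob {\<omega>\<in>space M. D \<omega> = real k} = exp (-\<mu>) * \<mu>^k / fact k"
  shows "integrable M D" "integrable M (\<lambda>\<omega>. (D \<omega>)^2)" "expectation D = \<mu>"
    "expectation (\<lambda>\<omega>. (D \<omega>)^2) = \<mu> + \<mu>^2"
proof -
  define p where "p k = exp (-\<mu>) * \<mu>^k / fact k" for k::nat
  have pnn: "0 \<le> p k" for k unfolding p_def using mu by simp
  have AE: "AE \<omega> in M. \<exists>k::nat. D \<omega> = real k" using poisson_nn(1)[OF D P, of "\<lambda>x. x"] by simp
  then have AE0: "AE \<omega> in M. 0 \<le> D \<omega>" by eventually_elim auto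
  have n1: "(\<integral>\<^sup>+\<omega>. ennreal (D \<omega>) \<partial>M) = ennreal \<mu>"
  proof -
    have "(\<integral>\<^sup>+\<omega>. ennreal (D \<omega>) \<partial>M) = (\<Sum>k. ennreal (real k * p k))"
      using poisson_nn(2)[OF D P, of "\<lambda>x. x", folded p_def] pnn by (simp add: ennreal_mult)
    also have "\<dots> = ennreal (\<Sum>k. real k * p k)"
      using poisson_sums(2)[of \<mu>] pnn mu by (intro suminf_ennreal2) (auto simp: sums_iff p_def[abs_def])
    also have "\<dots> = ennreal \<mu>" using poisson_sums(2)[of \<mu>] by (simp add: sums_iff p_def[abs_def])
    finally show ?thesis .
  qed
  have n2: "(\<integral>\<^sup>+\<omega>. ennreal ((D \<omega>)^2) \<partial>M) = ennreal (\<mu> + \<mu>^2)"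
  proof -
    have "(\<integral>\<^sup>+\<omega>. ennreal ((D \<omega>)^2) \<partial>M) = (\<Sum>k. ennreal ((real k)^2 * p k))"
      using poisson_nn(2)[OF D P, of "\<lambda>x. x^2", folded p_def] pnn by (simp add: ennreal_mult)
    also have "\<dots> = ennreal (\<Sum>k. (real k)^2 * p k)"
      using poisson_sums(3)[of \<mu>] pnn mu by (intro suminf_ennreal2) (auto simp: sums_iff p_def[abs_def])
    also have "\<dots> = ennreal (\<mu> + \<mu>^2)" using poisson_sums(3)[of \<mu>] by (simp add: sums_iff p_def[abs_def])
    finally show ?thesis .
  qed
  show "integrable M D" by (rule integrableI_nonneg) (use AE0 n1 in auto)
  show "integrable M (\<lambda>\<omega>. (D \<omega>)^2)" by (rule integrableI_nonneg) (use n2 in auto)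
  show "expectation D = \<mu>" using integral_eq_nn_integral[of D M] AE0 n1 mu by simp
  show "expectation (\<lambda>\<omega>. (D \<omega>)^2) = \<mu> + \<mu>^2"
    using integral_eq_nn_integral[of "\<lambda>\<omega>. (D \<omega>)^2" M] n2 mu by (simp del: ennreal_plus add: ennreal_plus[symmetric])
qed
end
context prob_space begin
lemma gauss_moments:
  assumes D: "distributed M lborel X (normal_density 0 \<sigma>)" and s: "\<sigma> > 0"
  shows "integrable M X" "integrable M (\<lambda>\<omega>. (X \<omega>)^2)" "expectation X = 0"
    "expectation (\<lambda>\<omega>. (X \<omega>)^2) = \<sigma>^2"
proof -
  show "integrable M X"
    using distributed_integrable[OF D, of "\<lambda>x. x"] integrable_normal_moment_nz_1[OF s, of 0]
    by (simp add: normal_density_nonneg)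
  show "integrable M (\<lambda>\<omega>. (X \<omega>)^2)"
    using distributed_integrable[OF D, of "\<lambda>x. x^2"] integrable_normal_moment[OF s, of 0 2]
    by (simp add: normal_density_nonneg)
  show "expectation X = 0" using normal_distributed_expectation[OF s D] .
  show "expectation (\<lambda>\<omega>. (X \<omega>)^2) = \<sigma>^2"
    using distributed_integral[OF D, of "\<lambda>x. x^2", symmetric] integral_normal_moment_even[OF s, of 0 1]
    by (simp add: normal_density_nonneg power2_eq_square)
qed

lemma indep_Z:
  assumes J: "joint_indep M X0 W N" and dt: "dt > 0"
  shows "indep_vars (\<lambda>_. borel) (\<lambda>i \<omega>. case i of IX0 \<Rightarrow> X0 \<omega>
            | IW j \<Rightarrow> W (real (Suc j) * dt) \<omega> - W (real j * dt) \<omega>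
            | IN j \<Rightarrow> N (real (Suc j) * dt) \<omega> - N (real j * dt) \<omega>)
          ({IX0} \<union> IW ` {..<k} \<union> IN ` {..<k})"
  using J[unfolded joint_indep_def, rule_format, of "\<lambda>j. real j * dt" k] dt
  by (simp add: algebra_simps)
end
context prob_space begin
lemma ms_formula:
  assumes W: "is_brownian M W" and Np: "is_poisson M lam N" and lam: "lam > 0" and dt: "dt > 0"
    and adm: "admissible_init M X0 W N"
  shows "integrable M (\<lambda>\<omega>. (semi_tamed (\<lambda>x. a * x) (\<lambda>_. 0) (\<lambda>x. b * x) (\<lambda>x. c * x) dt W N X0 n \<omega>)\<^sup>2) \<and>
     expectation (\<lambda>\<omega>. (semi_tamed (\<lambda>x. a * x) (\<lambda>_. 0) (\<lambda>x. b * x) (\<lambda>x. c * x) dt W N X0 n \<omega>)\<^sup>2)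
       = expectation (\<lambda>\<omega>. (X0 \<omega>)\<^sup>2) * (1 + (2 * a + b\<^sup>2 + lam * c * (2 + c)) * dt + (a + lam * c)\<^sup>2 * dt\<^sup>2) ^ n"
proof -
  define dW where "dW j \<omega> = W (real (Suc j) * dt) \<omega> - W (real j * dt) \<omega>" for j \<omega>
  define dN where "dN j \<omega> = N (real (Suc j) * dt) \<omega> - N (real j * dt) \<omega>" for j \<omega>
  define K where "K = 1 + a * dt"
  define R where "R j \<omega> = K + b * dW j \<omega> + c * dN j \<omega>" for j \<omega>
  define Y where "Y n \<omega> = semi_tamed (\<lambda>x. a * x) (\<lambda>_. 0) (\<lambda>x. b * x) (\<lambda>x. c * x) dt W N X0 n \<omega>" for n \<omega>
  define q where "q = 1 + (2 * a + b\<^sup>2 + lam * c * (2 + c)) * dt + (a + lam * c)\<^sup>2 * dt\<^sup>2"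
  have Ysuc: "Y (Suc n) \<omega> = Y n \<omega> * R n \<omega>" for n \<omega>
    by (simp add: Y_def R_def dW_def dN_def K_def Let_def algebra_simps)
  have Yprod: "Y n \<omega> = X0 \<omega> * (\<Prod>j<n. R j \<omega>)" for n \<omega>
    by (induction n) (simp_all add: Ysuc Y_def[of 0])
  have X0m[measurable]: "X0 \<in> borel_measurable M" and X0i: "integrable M (\<lambda>\<omega>. (X0 \<omega>)^2)"
    and J: "joint_indep M X0 W N" using adm by (auto simp: admissible_init_def)
  have Wm[measurable]: "W t \<in> borel_measurable M" for t using W by (simp add: is_brownian_def)
  have Nm[measurable]: "N t \<in> borel_measurable M" for t using Np by (simp add: is_poisson_def)
  have dWm[measurable]: "dW j \<in> borel_measurable M" for j unfolding dW_def by measurable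
  have dNm[measurable]: "dN j \<in> borel_measurable M" for j unfolding dN_def by measurable
  have sd: "real (Suc j) * dt - real j * dt = dt" for j by (simp add: algebra_simps)
  have dWd: "distributed M lborel (dW j) (normal_density 0 (sqrt dt))" for j
  proof -
    have "0 \<le> real j * dt" "real j * dt < real (Suc j) * dt" using dt by auto
    then have "distributed M lborel (\<lambda>\<omega>. W (real (Suc j) * dt) \<omega> - W (real j * dt) \<omega>)
        (normal_density 0 (sqrt (real (Suc j) * dt - real j * dt)))"
      using W[unfolded is_brownian_def] by blast
    then show ?thesis unfolding sd dW_def[abs_def] by simp
  qed
  have sdt: "sqrt dt > 0" using dt by simp
  note G = gauss_moments[OF dWd sdt]
  have dNp: "prob {\<omega>\<in>space M. dN j \<omega> = real k} = exp (- (lam*dt)) * (lam*dt)^k / fact k" for j k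
  proof -
    have "0 \<le> real j * dt" "real j * dt < real (Suc j) * dt" using dt by auto
    then have "measure M {\<omega> \<in> space M. N (real (Suc j) * dt) \<omega> - N (real j * dt) \<omega> = real k}
          = exp (- lam * (real (Suc j) * dt - real j * dt)) * (lam * (real (Suc j) * dt - real j * dt)) ^ k / fact k"
      using Np[unfolded is_poisson_def] by blast
    then show ?thesis unfolding sd dN_def by simp
  qed
  have mu: "lam * dt > 0" using lam dt by simp
  note P = poisson_moments[OF dNm mu dNp]
  define Zf where "Zf = (\<lambda>i \<omega>. case i of IX0 \<Rightarrow> X0 \<omega> | IW j \<Rightarrow> dW j \<omega> | IN j \<Rightarrow> dN j \<omega>)"
  define Iset where "Iset k = {IX0} \<union> IW ` {..<k} \<union> IN ` {..<k}" for k
  have ind: "indep_vars (\<lambda>_. borel) Zf (Iset k)" for k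
    using indep_Z[OF J dt, of k] unfolding Zf_def Iset_def dW_def dN_def .
  have indWN: "indep_var borel (dW n) borel (dN n)" for n
  proof -
    have "indep_var (PiM {IW n} (\<lambda>_. borel)) (\<lambda>\<omega>. restrict (\<lambda>i. Zf i \<omega>) {IW n})
        (PiM {IN n} (\<lambda>_. borel)) (\<lambda>\<omega>. restrict (\<lambda>i. Zf i \<omega>) {IN n})"
      by (rule indep_var_restrict[OF ind[of "Suc n"]]) (auto simp: Iset_def)
    from indep_var_compose[OF this measurable_component_singleton[OF insertI1]
        measurable_component_singleton[OF insertI1]]
    show ?thesis by (simp add: comp_def Zf_def)
  qed
  have EWNi: "integrable M (\<lambda>\<omega>. dW n \<omega> * dN n \<omega>)" for n
    by (rule indep_var_integrable[OF indWN G(1) P(1)])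
  have EWN: "expectation (\<lambda>\<omega>. dW n \<omega> * dN n \<omega>) = 0" for n
    using indep_var_lebesgue_integral[OF indWN G(1) P(1)] G(3) by simp
  have Req: "(\<lambda>\<omega>. (R n \<omega>)^2) = (\<lambda>\<omega>. K^2 + (b^2 * (dW n \<omega>)^2 + (c^2 * (dN n \<omega>)^2 +
      (2*K*b * dW n \<omega> + (2*K*c * dN n \<omega> + 2*b*c * (dW n \<omega> * dN n \<omega>))))))" for n
    by (simp add: fun_eq_iff R_def power2_eq_square algebra_simps)
  have Ri: "integrable M (\<lambda>\<omega>. (R n \<omega>)^2)" for n
    unfolding Req using G P EWNi by simp
  have RE: "expectation (\<lambda>\<omega>. (R n \<omega>)^2) = q" for n
  proof -
    have "expectation (\<lambda>\<omega>. (R n \<omega>)^2) = K^2 + (b^2 * dt + (c^2 * (lam*dt + (lam*dt)^2) +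
      (2*K*b * 0 + (2*K*c * (lam*dt) + 2*b*c * 0))))"
      unfolding Req using G P EWNi EWN[of n] dt
      by (simp add: integral_add integrable_add integrable_mult_right prob_space)
    also have "\<dots> = q" unfolding q_def K_def by (simp add: power2_eq_square algebra_simps)
    finally show ?thesis .
  qed
  have indYR: "indep_var borel (\<lambda>\<omega>. (Y n \<omega>)^2) borel (\<lambda>\<omega>. (R n \<omega>)^2)" for n
  proof -
    define A where "A = {IX0} \<union> IW ` {..<n} \<union> IN ` {..<n}"
    define B where "B = {IW n, IN n}"
    have I0: "indep_var (PiM A (\<lambda>_. borel)) (\<lambda>\<omega>. restrict (\<lambda>i. Zf i \<omega>) A)
        (PiM B (\<lambda>_. borel)) (\<lambda>\<omega>. restrict (\<lambda>i. Zf i \<omega>) B)"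
      by (rule indep_var_restrict[OF ind[of "Suc n"]]) (auto simp: Iset_def A_def B_def)
    define F where "F f = (f IX0 * (\<Prod>j<n. K + b * f (IW j) + c * f (IN j)))^2" for f :: "incr_idx \<Rightarrow> real"
    define H where "H f = (K + b * f (IW n) + c * f (IN n))^2" for f :: "incr_idx \<Rightarrow> real"
    have cA: "(\<lambda>f. f i) \<in> borel_measurable (PiM A (\<lambda>_. borel))" if "i \<in> A" for i
      using measurable_component_singleton[OF that, of "\<lambda>_. borel"] by simp
    have cB: "(\<lambda>f. f i) \<in> borel_measurable (PiM B (\<lambda>_. borel))" if "i \<in> B" for i
      using measurable_component_singleton[OF that, of "\<lambda>_. borel"] by simp
    have Fm: "F \<in> borel_measurable (PiM A (\<lambda>_. borel))"
    proof -
      have "(\<lambda>f. \<Prod>j<n. K + b * f (IW j) + c * f (IN j)) \<in> borel_measurable (PiM A (\<lambda>_. borel))"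
      proof (rule borel_measurable_prod)
        fix j assume "j \<in> {..<n}"
        then have "IW j \<in> A" "IN j \<in> A" by (auto simp: A_def)
        note cA[OF this(1)] cA[OF this(2)]
        then show "(\<lambda>f. K + b * f (IW j) + c * f (IN j)) \<in> borel_measurable (PiM A (\<lambda>_. borel))"
          by measurable
      qed
      moreover have "IX0 \<in> A" by (simp add: A_def)
      note cA[OF this]
      ultimately show ?thesis unfolding F_def[abs_def] by measurable
    qed
    have Hm: "H \<in> borel_measurable (PiM B (\<lambda>_. borel))"
    proof -
      have "IW n \<in> B" "IN n \<in> B" by (auto simp: B_def)
      note cB[OF this(1)] cB[OF this(2)]
      then show ?thesis unfolding H_def[abs_def] by measurable
    qed
    have "indep_var borel (F \<circ> (\<lambda>\<omega>. restrict (\<lambda>i. Zf i \<omega>) A)) borel (H \<circ> (\<lambda>\<omega>. restrict (\<lambda>i. Zf i \<omega>) B))"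
      by (rule indep_var_compose[OF I0 Fm Hm])
    moreover have "F \<circ> (\<lambda>\<omega>. restrict (\<lambda>i. Zf i \<omega>) A) = (\<lambda>\<omega>. (Y n \<omega>)^2)"
    proof
      fix \<omega>
      have "(\<Prod>j<n. K + b * restrict (\<lambda>i. Zf i \<omega>) A (IW j) + c * restrict (\<lambda>i. Zf i \<omega>) A (IN j))
           = (\<Prod>j<n. R j \<omega>)"
        by (rule prod.cong) (auto simp: A_def Zf_def R_def)
      then show "(F \<circ> (\<lambda>\<omega>. restrict (\<lambda>i. Zf i \<omega>) A)) \<omega> = (Y n \<omega>)^2"
        by (simp add: F_def Yprod A_def Zf_def)
    qed
    moreover have "H \<circ> (\<lambda>\<omega>. restrict (\<lambda>i. Zf i \<omega>) B) = (\<lambda>\<omega>. (R n \<omega>)^2)"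
      by (auto simp: fun_eq_iff H_def B_def Zf_def R_def)
    ultimately show ?thesis by simp
  qed
  have main: "integrable M (\<lambda>\<omega>. (Y n \<omega>)^2) \<and> expectation (\<lambda>\<omega>. (Y n \<omega>)^2) = expectation (\<lambda>\<omega>. (X0 \<omega>)^2) * q ^ n" for n
  proof (induction n)
    case 0
    then show ?case using X0i by (simp add: Y_def)
  next
    case (Suc n)
    have eq: "(\<lambda>\<omega>. (Y (Suc n) \<omega>)^2) = (\<lambda>\<omega>. (Y n \<omega>)^2 * (R n \<omega>)^2)"
      by (simp add: Ysuc power_mult_distrib)
    show ?case unfolding eq
      using indep_var_integrable[OF indYR[of n] conjunct1[OF Suc] Ri[of n]]
        indep_var_lebesgue_integral[OF indYR[of n] conjunct1[OF Suc] Ri[of n]] Suc RE[of n]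
      by simp
  qed
  show ?thesis using main[of n] unfolding Y_def q_def .
qed
end
theorem mainTheorem1:
  fixes M :: "'a measure" and W N :: "real \<Rightarrow> 'a \<Rightarrow> real"
    and a b c lam dt :: real
  assumes "prob_space M"
    and "lam > 0" and "dt > 0"
    and "is_brownian M W" and "is_poisson M lam N"
    and "joint_indep M (\<lambda>_. 0) W N"
    and "2 * a + b\<^sup>2 + lam * c * (2 + c) < 0"
  shows "a + lam * c < 0 \<and>
    (ms_stable M (\<lambda>x. a * x) (\<lambda>_. 0) (\<lambda>x. b * x) (\<lambda>x. c * x) dt W N
       \<longleftrightarrow> dt < - (2 * a + b\<^sup>2 + lam * c * (2 + c)) / (a + lam * c)\<^sup>2)"
proof -
  interpret prob_space M by fact
  define l where "l = 2 * a + b\<^sup>2 + lam * c * (2 + c)"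
  define s where "s = a + lam * c"
  define q where "q = 1 + l * dt + s\<^sup>2 * dt\<^sup>2"
  have lneg: "l < 0" using assms(7) by (simp add: l_def)
  have lexp: "l = 2 * s + b\<^sup>2 + lam * c\<^sup>2" by (simp add: l_def s_def power2_eq_square algebra_simps)
  have "lam * c\<^sup>2 \<ge> 0" using assms(2) by simp
  moreover have "b\<^sup>2 \<ge> 0" by simp
  ultimately have sneg: "s < 0" using lneg lexp by linarith
  have s2: "s\<^sup>2 > 0" using sneg by simp
  have qexp: "q = (1 + s * dt)\<^sup>2 + (b\<^sup>2 + lam * c\<^sup>2) * dt"
    by (simp add: q_def lexp power2_eq_square algebra_simps)
  have q0: "q \<ge> 0" unfolding qexp using assms(2,3) by (intro add_nonneg_nonneg mult_nonneg_nonneg) auto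
  have crit: "dt < - l / s\<^sup>2 \<longleftrightarrow> q < 1"
  proof -
    have "dt < - l / s\<^sup>2 \<longleftrightarrow> dt * s\<^sup>2 < - l" using pos_less_divide_eq[OF s2, of dt "-l"] by simp
    also have "\<dots> \<longleftrightarrow> dt * (dt * s\<^sup>2) < dt * (- l)" using assms(3) mult_less_cancel_left_pos[of dt "dt * s\<^sup>2" "-l"] by simp
    also have "\<dots> \<longleftrightarrow> q < 1" unfolding q_def power2_eq_square by argo
    finally show ?thesis .
  qed
  have form: "\<And>X0 n. admissible_init M X0 W N \<Longrightarrow>
     expectation (\<lambda>\<omega>. (semi_tamed (\<lambda>x. a * x) (\<lambda>_. 0) (\<lambda>x. b * x) (\<lambda>x. c * x) dt W N X0 n \<omega>)\<^sup>2)
       = expectation (\<lambda>\<omega>. (X0 \<omega>)\<^sup>2) * q ^ n"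
    using ms_formula[OF assms(4,5,2,3)] unfolding q_def l_def s_def by blast
  have J1: "joint_indep M (\<lambda>_. 1) W N"
    unfolding joint_indep_def
  proof (intro allI impI)
    fix ts :: "nat \<Rightarrow> real" and k assume h: "0 \<le> ts 0 \<and> (\<forall>j<k. ts j < ts (Suc j))"
    let ?I = "{IX0} \<union> IW ` {..<k} \<union> IN ` {..<k}"
    let ?Z0 = "\<lambda>i \<omega>. case i of IX0 \<Rightarrow> (0::real) | IW j \<Rightarrow> W (ts (Suc j)) \<omega> - W (ts j) \<omega>
                          | IN j \<Rightarrow> N (ts (Suc j)) \<omega> - N (ts j) \<omega>"
    let ?Z1 = "\<lambda>i \<omega>. case i of IX0 \<Rightarrow> (1::real) | IW j \<Rightarrow> W (ts (Suc j)) \<omega> - W (ts j) \<omega>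
                          | IN j \<Rightarrow> N (ts (Suc j)) \<omega> - N (ts j) \<omega>"
    let ?Y = "\<lambda>i. case i of IX0 \<Rightarrow> (\<lambda>x::real. x + 1) | _ \<Rightarrow> (\<lambda>x. x)"
    have "indep_vars (\<lambda>_. borel) ?Z0 ?I" using assms(6) h unfolding joint_indep_def by blast
    then have "indep_vars (\<lambda>_. borel) (\<lambda>i \<omega>. ?Y i (?Z0 i \<omega>)) ?I"
      by (rule indep_vars_compose2) (auto split: incr_idx.split)
    moreover have "(\<lambda>i \<omega>. ?Y i (?Z0 i \<omega>)) = ?Z1" by (auto simp: fun_eq_iff split: incr_idx.split)
    ultimately show "indep_vars (\<lambda>_. borel) ?Z1 ?I" by simp
  qed
  have adm1: "admissible_init M (\<lambda>_. 1) W N" using J1 by (simp add: admissible_init_def)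
  have "ms_stable M (\<lambda>x. a * x) (\<lambda>_. 0) (\<lambda>x. b * x) (\<lambda>x. c * x) dt W N \<longleftrightarrow> q < 1"
  proof
    assume ms: "ms_stable M (\<lambda>x. a * x) (\<lambda>_. 0) (\<lambda>x. b * x) (\<lambda>x. c * x) dt W N"
    have "(\<lambda>n. q ^ n) \<longlonglongrightarrow> 0"
      using ms[unfolded ms_stable_def, rule_format, OF adm1] form[OF adm1] by (simp add: prob_space)
    show "q < 1"
    proof (rule ccontr)
      assume "\<not> q < 1"
      then have "\<forall>n\<ge>0. 1 \<le> q ^ n" by (simp add: one_le_power)
      with \<open>(\<lambda>n. q ^ n) \<longlonglongrightarrow> 0\<close> have "(1::real) \<le> 0" by (intro LIMSEQ_le_const) auto
      then show False by simp
    qed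
  next
    assume q1: "q < 1"
    show "ms_stable M (\<lambda>x. a * x) (\<lambda>_. 0) (\<lambda>x. b * x) (\<lambda>x. c * x) dt W N"
      unfolding ms_stable_def
    proof (intro allI impI)
      fix X0 assume adm: "admissible_init M X0 W N"
      have "(\<lambda>n. q ^ n) \<longlonglongrightarrow> 0" using q0 q1 by (intro LIMSEQ_power_zero) simp
      then have "(\<lambda>n. expectation (\<lambda>\<omega>. (X0 \<omega>)\<^sup>2) * q ^ n) \<longlonglongrightarrow> 0"
        by (rule tendsto_mult_right_zero)
      then show "(\<lambda>n. expectation (\<lambda>\<omega>. (semi_tamed (\<lambda>x. a * x) (\<lambda>_. 0) (\<lambda>x. b * x) (\<lambda>x. c * x) dt W N X0 n \<omega>)\<^sup>2)) \<longlonglongrightarrow> 0"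
        using form[OF adm] by simp
    qed
  qed
  then show ?thesis using sneg crit unfolding l_def s_def by simp
qed

end
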